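(* Let $0<b<c$ and $x_1,\dots,x_T\in\mathbb{R}^d$. Define $D_0=\frac{bc}{c-b}I$ and $D_t=\big(D_{t-1}^{-1}+c^{-1}I\big)^{-1}+x_tx_t^\top$ for $t\ge1$. Then \[ \sum_{t=1}^T x_t^\top D_t^{-1}x_t\le \ln\Big|\tfrac1b D_T\Big|+c^{-1}\sum_{t=1}^T\mathrm{Tr}(D_{t-1}), \] where $|\cdot|$ denotes the determinant. *)

theory Defs
  imports "HOL-Analysis.Analysis"
begin

definition outer_prod :: "real^'n \<Rightarrow> real^'n^'n" where
  "outer_prod x = (\<chi> i j. x $ i * x $ j)"

fun Dseq :: "real \<Rightarrow> real \<Rightarrow> (nat \<Rightarrow> real^'n) \<Rightarrow> nat \<Rightarrow> real^'n^'n" where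
  "Dseq b c x 0 = (b * c / (c - b)) *\<^sub>R mat 1"
| "Dseq b c x (Suc t) =
     matrix_inv (matrix_inv (Dseq b c x t) + (1 / c) *\<^sub>R mat 1) + outer_prod (x (Suc t))"

end

theory Submission
  imports Defs
begin


definition pd :: "real^'n^'n \<Rightarrow> bool" where
  "pd A \<longleftrightarrow> transpose A = A \<and> (\<forall>v. v \<noteq> 0 \<longrightarrow> 0 < v \<bullet> (A *v v))"

definition R1 :: "real^'n \<Rightarrow> real^'n \<Rightarrow> real^'n^'n" where
  "R1 u v = (\<chi> i j. u$i * v$j)"

lemma minv:
  fixes A :: "real^'n^'n"
  assumes "invertible A"
  shows "A ** matrix_inv A = mat 1" "matrix_inv A ** A = mat 1"
proof -
  have "\<exists>A'. A ** A' = mat 1 \<and> A' ** A = mat 1" using assms by (simp add: invertible_def)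
  hence "A ** matrix_inv A = mat 1 \<and> matrix_inv A ** A = mat 1"
    unfolding matrix_inv_def by (rule someI_ex)
  thus "A ** matrix_inv A = mat 1" "matrix_inv A ** A = mat 1" by auto
qed

lemma minv_unique:
  fixes A X :: "real^'n^'n"
  assumes "invertible A" "X ** A = mat 1"
  shows "X = matrix_inv A"
proof -
  have "X = X ** (A ** matrix_inv A)" using minv[OF assms(1)] by simp
  also have "\<dots> = (X ** A) ** matrix_inv A" by (simp add: matrix_mul_assoc)
  finally show ?thesis using assms(2) by simp
qed

lemma minv_invertible:
  fixes A :: "real^'n^'n"
  assumes "invertible A"
  shows "invertible (matrix_inv A)"
  using minv[OF assms] unfolding invertible_def by blast

lemma minv_vec:
  fixes A :: "real^'n^'n"
  assumes "invertible A"
  shows "A *v (matrix_inv A *v v) = v" "matrix_inv A *v (A *v v) = v"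
  using minv[OF assms] by (simp_all add: matrix_vector_mul_assoc)

lemma det_minv:
  fixes A :: "real^'n^'n"
  assumes "invertible A"
  shows "det (matrix_inv A) = 1 / det A"
proof -
  have "det A * det (matrix_inv A) = 1" using minv[OF assms] det_mul[of A "matrix_inv A"] by simp
  thus ?thesis by (metis eq_divide_eq mult.commute mult_zero_left zero_neq_one)
qed

lemma pd_invertible:
  fixes A :: "real^'n^'n"
  assumes "pd A" shows "invertible A"
proof -
  have "inj ((*v) A)"
  proof (rule linear_injective_0[THEN iffD2])
    show "linear ((*v) A)" by simp
    show "\<forall>v. A *v v = 0 \<longrightarrow> v = 0"
      using assms unfolding pd_def by (metis inner_zero_right less_irrefl)
  qed
  thus ?thesis unfolding invertible_left_inverse matrix_left_invertible_injective .
qed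

lemma pd_minv:
  fixes A :: "real^'n^'n"
  assumes "pd A" shows "pd (matrix_inv A)"
proof -
  have inv: "invertible A" using pd_invertible[OF assms] .
  have sym: "transpose A = A" using assms pd_def by auto
  have "transpose (matrix_inv A) ** A = mat 1"
    by (metis inv minv(1) matrix_transpose_mul sym transpose_mat)
  hence t: "transpose (matrix_inv A) = matrix_inv A" using minv_unique[OF inv] by blast
  have "0 < v \<bullet> (matrix_inv A *v v)" if "v \<noteq> 0" for v
  proof -
    define w where "w = matrix_inv A *v v"
    have Aw: "A *v w = v" using minv_vec[OF inv] w_def by simp
    hence "w \<noteq> 0" using that by auto
    hence "0 < w \<bullet> (A *v w)" using assms pd_def by auto
    thus ?thesis using Aw w_def by (simp add: inner_commute)
  qed
  thus ?thesis using t pd_def by auto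
qed

lemma pd_add:
  fixes A B :: "real^'n^'n"
  assumes "pd A" "transpose B = B" "\<And>v. 0 \<le> v \<bullet> (B *v v)"
  shows "pd (A + B)"
  using assms unfolding pd_def
  by (auto simp: transpose_def vec_eq_iff matrix_vector_mult_add_rdistrib inner_add_right add_pos_nonneg)

lemma pd_scale:
  fixes A :: "real^'n^'n"
  assumes "pd A" "0 < k"
  shows "pd (k *\<^sub>R A)"
proof -
  have e: "(k *\<^sub>R A) *v v = k *\<^sub>R (A *v v)" for v
    by (simp add: matrix_vector_mult_def vec_eq_iff sum_distrib_left mult_ac)
  show ?thesis using assms unfolding pd_def
    by (auto simp: e transpose_def vec_eq_iff)
qed

lemma pd_id: "pd (mat 1 :: real^'n^'n)"
  unfolding pd_def by (simp add: transpose_mat)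

lemma R1_vec: "R1 u v *v w = (v \<bullet> w) *\<^sub>R u"
  by (simp add: R1_def matrix_vector_mult_def vec_eq_iff inner_vec_def sum_distrib_left mult_ac)

lemma outer_R1: "outer_prod x = R1 x x"
  by (simp add: outer_prod_def R1_def)

lemma pd_add_outer:
  fixes A :: "real^'n^'n"
  assumes "pd A" shows "pd (A + outer_prod x)"
proof (rule pd_add[OF assms])
  show "transpose (outer_prod x) = outer_prod x"
    by (simp add: outer_prod_def transpose_def vec_eq_iff mult.commute)
  show "0 \<le> v \<bullet> (outer_prod x *v v)" for v
    by (simp add: outer_R1 R1_vec inner_commute)
qed



lemma det_row_id:
  fixes r :: "real^'n"
  shows "det ((\<chi> i. if i = k then r else axis i 1) :: real^'n^'n) = r$k"
proof -
  define A :: "real^'n^'n" where "A = (\<chi> i. if i = k then (r$k) *s axis i 1 else axis i 1)"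
  define x where "x = r - (r$k) *s axis k 1"
  have rowA: "row i A = (if i = k then (r$k) *s axis k 1 else axis i 1)" for i
    by (simp add: A_def row_def vec_eq_iff)
  have xs: "x = (\<Sum>j\<in>UNIV-{k}. (x$j) *s axis j 1)"
  proof -
    have "x = (\<Sum>j\<in>UNIV. (x$j) *s axis j 1)"
      by (simp add: basis_expansion)
    also have "\<dots> = (x$k) *s axis k 1 + (\<Sum>j\<in>UNIV-{k}. (x$j) *s axis j 1)"
      by (rule sum.remove) auto
    also have "x$k = 0" by (simp add: x_def axis_def)
    finally show ?thesis by simp
  qed
  have "(\<Sum>j\<in>UNIV-{k}. (x$j) *s axis j 1) \<in> vec.span {row j A |j. j \<noteq> k}"
  proof (rule vec.span_sum)
    fix j assume "j \<in> UNIV - {k}"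
    hence "axis j 1 \<in> {row j A |j. j \<noteq> k}" using rowA by auto
    thus "(x$j) *s axis j 1 \<in> vec.span {row j A |j. j \<noteq> k}"
      by (intro vec.span_scale vec.span_base)
  qed
  hence "x \<in> vec.span {row j A |j. j \<noteq> k}" using xs by simp
  from det_row_span[OF this]
  have "det (\<chi> i. if i = k then row k A + x else row i A) = det A" .
  moreover have "(\<chi> i. if i = k then row k A + x else row i A) = (\<chi> i. if i = k then r else axis i 1)"
    by (simp add: rowA x_def vec_eq_iff)
  moreover have "det A = r$k"
  proof -
    have "det A = r$k * det ((\<chi> i. if i = k then axis i 1 else axis i 1) :: real^'n^'n)"
      unfolding A_def using det_row_mul[of k "r$k" "\<lambda>i. axis i 1" "\<lambda>i. axis i 1"] by simp
    also have "(\<chi> i. if i = k then axis i 1 else axis i 1) = (mat 1 :: real^'n^'n)"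
      by (simp add: vec_eq_iff mat_def axis_def)
    finally show ?thesis by simp
  qed
  ultimately show ?thesis by simp
qed

lemma R1_mul_left: "(A::real^'n^'n) ** R1 y z = R1 (A *v y) z"
  by (simp add: R1_def matrix_matrix_mult_def matrix_vector_mult_def vec_eq_iff sum_distrib_left sum_distrib_right mult_ac)

lemma R1_mul_right: "R1 y z ** (A::real^'n^'n) = R1 y (transpose A *v z)"
  by (simp add: R1_def matrix_matrix_mult_def matrix_vector_mult_def transpose_def vec_eq_iff sum_distrib_left mult_ac)

lemma matrix_add_rdistrib: "((A::real^'n^'n) + B) ** C = A ** C + B ** C"
  by (simp add: matrix_matrix_mult_def vec_eq_iff distrib_right sum.distrib)

lemma det_rank1:
  fixes u v :: "real^'n"
  shows "det (mat 1 + R1 u v) = 1 + u \<bullet> v"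
proof (cases "u = 0")
  case True
  have "R1 u v = 0" using True by (simp add: R1_def vec_eq_iff)
  thus ?thesis using True by simp
next
  case False
  then obtain k where uk: "u$k \<noteq> 0" by (auto simp: vec_eq_iff)
  define C :: "real^'n^'n" where "C = (\<chi> i j. if j = k then u$i else (if i = j then 1 else 0))"
  have Ct: "transpose C = (\<chi> i. if i = k then u else axis i 1)"
    by (simp add: C_def transpose_def vec_eq_iff axis_def)
  have dC: "det C = u$k" using det_row_id[of k u] Ct det_transpose[of C] by simp
  define w where "w = transpose C *v v"
  have Ck: "C *v axis k 1 = u"
    unfolding C_def matrix_vector_mult_def vec_eq_iff axis_def
    by (simp add: vec_lambda_beta if_distrib[of "\<lambda>x. _ * x"] sum.delta' cong: if_cong)
  have eq: "(mat 1 + R1 u v) ** C = C ** (mat 1 + R1 (axis k 1) w)"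
    by (simp add: matrix_add_rdistrib matrix_add_ldistrib R1_mul_left R1_mul_right Ck w_def)
  have M: "mat 1 + R1 (axis k 1) w = (\<chi> i. if i = k then axis k 1 + w else axis i 1)"
    by (simp add: R1_def mat_def axis_def vec_eq_iff)
  have wk: "w$k = u \<bullet> v"
    by (simp add: w_def C_def matrix_vector_mult_def transpose_def inner_vec_def)
  have "det (mat 1 + R1 u v) * det C = det C * (1 + u \<bullet> v)"
    using eq det_mul[of "mat 1 + R1 u v" C] det_mul[of C "mat 1 + R1 (axis k 1) w"]
      det_row_id[of k "axis k 1 + w"] M wk by (simp add: axis_def)
  thus ?thesis using dC uk by simp
qed



lemma mv_scaleR: "(A::real^'n^'n) *v (k *\<^sub>R v) = k *\<^sub>R (A *v v)"
  by (simp add: matrix_vector_mult_def vec_eq_iff sum_distrib_left mult_ac)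

lemma update:
  fixes A :: "real^'n^'n" and x :: "real^'n"
  assumes "pd A"
  defines "q \<equiv> x \<bullet> (matrix_inv A *v x)"
  shows "0 \<le> q" "det (A + outer_prod x) = det A * (1 + q)"
    "x \<bullet> (matrix_inv (A + outer_prod x) *v x) = q / (1 + q)"
proof -
  have invA: "invertible A" using pd_invertible[OF assms(1)] .
  show q0: "0 \<le> q"
  proof (cases "x = 0")
    case True then show ?thesis by (simp add: q_def)
  next
    case False then show ?thesis using pd_minv[OF assms(1)] unfolding pd_def q_def
      by (simp add: less_imp_le)
  qed
  define y where "y = matrix_inv A *v x"
  have Ay: "A *v y = x" using minv_vec[OF invA] y_def by simp
  have "A + outer_prod x = A ** (mat 1 + R1 y x)"
    by (simp add: matrix_add_ldistrib R1_mul_left Ay outer_R1)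
  hence "det (A + outer_prod x) = det A * det (mat 1 + R1 y x)" by (simp add: det_mul)
  also have "det (mat 1 + R1 y x) = 1 + q" using det_rank1[of y x]
    by (simp add: q_def y_def inner_commute)
  finally show "det (A + outer_prod x) = det A * (1 + q)" .
  have Dy: "(A + outer_prod x) *v y = (1 + q) *\<^sub>R x"
    by (simp add: matrix_vector_mult_add_rdistrib minv_vec[OF invA] outer_R1 R1_vec q_def y_def algebra_simps)
  have invD: "invertible (A + outer_prod x)" using pd_invertible[OF pd_add_outer[OF assms(1)]] .
  have "x = (1/(1+q)) *\<^sub>R ((A + outer_prod x) *v y)" using Dy q0 by simp
  hence "matrix_inv (A + outer_prod x) *v x = (1/(1+q)) *\<^sub>R y"
    by (metis minv_vec(2)[OF invD] mv_scaleR)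
  thus "x \<bullet> (matrix_inv (A + outer_prod x) *v x) = q / (1 + q)"
    by (simp add: q_def y_def)
qed



lemma d1: "(\<Sum>l\<in>UNIV. (if i = l then 1 else 0) * (f (l::'a::finite)::real)) = f i"
  by (simp add: if_distrib[of "\<lambda>x. x * _"] sum.delta sum.delta' cong: if_cong)
lemma d2: "(\<Sum>l\<in>UNIV. (if l = k then (a::real) else 0) * (f (l::'a::finite)::real)) = a * f k"
  by (simp add: if_distrib[of "\<lambda>x. x * _"] sum.delta sum.delta' cong: if_cong)
lemma d3: "(\<Sum>l\<in>UNIV. (f (l::'a::finite)::real) * (if i = l then 1 else 0)) = f i"
  by (simp add: if_distrib[of "\<lambda>x. _ * x"] sum.delta sum.delta' cong: if_cong)
lemma d4: "(\<Sum>l\<in>UNIV. (f (l::'a::finite)::real) * (if l = k then (a::real) else 0)) = a * f k"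
  by (simp add: if_distrib[of "\<lambda>x. _ * x"] sum.delta sum.delta' cong: if_cong)

lemma pd_sym: "pd P \<Longrightarrow> P$i$j = P$j$i"
  unfolding pd_def by (metis transpose_def vec_lambda_beta)

lemma pd_diag:
  fixes P :: "real^'n^'n"
  assumes "pd P" shows "0 < P$i$i"
proof -
  have nz: "axis i (1::real) \<noteq> 0" by (simp add: axis_eq_0_iff)
  have "0 < axis i 1 \<bullet> (P *v axis i 1)" using assms nz unfolding pd_def by blast
  moreover have "axis i 1 \<bullet> (P *v axis i 1) = (P *v axis i 1)$i"
    by (simp add: inner_axis')
  moreover have "(P *v axis i 1)$i = P$i$i"
    by (simp add: matrix_vector_mult_def axis_def d4)
  ultimately show ?thesis by simp
qed

lemma inner_mv: "(v::real^'n) \<bullet> ((E::real^'n^'n) *v w) = (transpose E *v v) \<bullet> w"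
proof -
  have "v \<bullet> (E *v w) = (\<Sum>i\<in>UNIV. \<Sum>j\<in>UNIV. v$i * (E$i$j * w$j))"
    by (simp add: inner_vec_def matrix_vector_mult_def sum_distrib_left)
  also have "\<dots> = (\<Sum>j\<in>UNIV. \<Sum>i\<in>UNIV. v$i * (E$i$j * w$j))"
    by (rule sum.swap)
  also have "\<dots> = (\<Sum>j\<in>UNIV. (\<Sum>i\<in>UNIV. E$i$j * v$i) * w$j)"
    by (rule sum.cong[OF refl]) (simp add: sum_distrib_left sum_distrib_right mult_ac)
  also have "\<dots> = (transpose E *v v) \<bullet> w"
    by (simp add: inner_vec_def matrix_vector_mult_def transpose_def)
  finally show ?thesis .
qed

lemma pd_congr:
  fixes P E :: "real^'n^'n"
  assumes "pd P" "invertible E"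
  shows "pd (E ** P ** transpose E)"
proof -
  have t: "transpose (E ** P ** transpose E) = E ** P ** transpose E"
    using assms(1) unfolding pd_def by (simp add: matrix_transpose_mul matrix_mul_assoc)
  have "0 < v \<bullet> ((E ** P ** transpose E) *v v)" if "v \<noteq> 0" for v
  proof -
    have "inj ((*v) (transpose E))" using inj_matrix_vector_mult transpose_invertible assms(2) by blast
    hence "transpose E *v v \<noteq> 0" using that
      by (metis matrix_vector_mult_0_right injD)
    hence "0 < (transpose E *v v) \<bullet> (P *v (transpose E *v v))" using assms(1) pd_def by auto
    thus ?thesis by (simp add: inner_mv matrix_vector_mul_assoc[symmetric])
  qed
  thus ?thesis using t pd_def by auto
qed

lemma had_gen:
  fixes S :: "'n::finite set"
  assumes "finite S"
  shows "\<forall>P::real^'n^'n. pd P \<and> (\<forall>i j. i \<noteq> j \<and> (i \<notin> S \<or> j \<notin> S) \<longrightarrow> P$i$j = 0)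
          \<longrightarrow> 0 < det P \<and> det P \<le> (\<Prod>i\<in>UNIV. P$i$i)"
  using assms
proof (induction S rule: finite_induct)
  case empty
  show ?case
  proof (intro allI impI)
    fix P :: "real^'n^'n" assume h: "pd P \<and> (\<forall>i j. i \<noteq> j \<and> (i \<notin> {} \<or> j \<notin> {}) \<longrightarrow> P$i$j = 0)"
    hence "det P = (\<Prod>i\<in>UNIV. P$i$i)" by (intro det_diagonal) auto
    moreover have "0 < (\<Prod>i\<in>UNIV. P$i$i)" using pd_diag h by (intro prod_pos) auto
    ultimately show "0 < det P \<and> det P \<le> (\<Prod>i\<in>UNIV. P$i$i)" by simp
  qed
next
  case (insert k S)
  show ?case
  proof (intro allI impI)
    fix P :: "real^'n^'n"
    assume h: "pd P \<and> (\<forall>i j. i \<noteq> j \<and> (i \<notin> insert k S \<or> j \<notin> insert k S) \<longrightarrow> P$i$j = 0)"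
    have pdP: "pd P" using h by simp
    have z: "\<And>i j. i \<noteq> j \<Longrightarrow> i \<notin> insert k S \<or> j \<notin> insert k S \<Longrightarrow> P$i$j = 0" using h by blast
    have sym: "\<And>i j. P$i$j = P$j$i" using pd_sym[OF pdP] .
    have pkk: "0 < P$k$k" using pd_diag[OF pdP] .
    define u :: "real^'n" where "u = (\<chi> j. if j = k then 0 else P$j$k / P$k$k)"
    define E :: "real^'n^'n" where "E = mat 1 + R1 (-u) (axis k 1)"
    have dE: "det E = 1" unfolding E_def det_rank1 by (simp add: u_def inner_axis)
    hence invE: "invertible E" by (simp add: invertible_det_nz)
    define P' where "P' = E ** P ** transpose E"
    have Eij: "E$i$j = (if i = j then 1 else 0) - (if j = k then u$i else 0)" for i j
      by (simp add: E_def R1_def mat_def axis_def)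
    have EP: "(E ** P)$i$j = P$i$j - u$i * P$k$j" for i j
      by (simp only: matrix_matrix_mult_def vec_lambda_beta Eij left_diff_distrib sum_subtractf d1 d2)
    have P'ij: "P'$i$j = P$i$j - u$i * P$k$j - u$j * (P$i$k - u$i * P$k$k)" for i j
      unfolding P'_def
      by (simp only: matrix_matrix_mult_def[of "E ** P"] vec_lambda_beta transpose_def EP Eij right_diff_distrib sum_subtractf d3 d4)
    have pdP': "pd P'" unfolding P'_def using pd_congr[OF pdP invE] .
    have detP': "det P' = det P" by (simp add: P'_def det_mul dE)
    have uk: "u$k = 0" by (simp add: u_def)
    have uz: "u$i = 0" if "i \<notin> insert k S" for i
      using that z[of i k] by (auto simp: u_def)
    have zero': "P'$i$j = 0" if ne: "i \<noteq> j" and out: "i \<notin> S \<or> j \<notin> S" for i j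
    proof -
      consider "i = k" | "j = k" | "i \<noteq> k" "j \<noteq> k" "i \<notin> insert k S \<or> j \<notin> insert k S" using ne out by auto
      thus ?thesis
      proof cases
        case 1 thus ?thesis using ne pkk by (simp add: P'ij uk u_def sym[of k j])
      next
        case 2 thus ?thesis using ne pkk by (simp add: P'ij uk u_def sym[of k i] field_simps)
      next
        case 3
        hence "P$i$j = 0" "P$k$j = 0 \<or> u$i = 0" "P$i$k = 0 \<or> u$j = 0" "u$i = 0 \<or> u$j = 0"
          using z[of i j] z[of k j] z[of i k] uz[of i] uz[of j] ne by auto
        thus ?thesis by (auto simp: P'ij)
      qed
    qed
    have diag': "P'$i$i \<le> P$i$i" for i
    proof (cases "i = k")
      case True thus ?thesis by (simp add: P'ij uk)
    next
      case False
      hence "P'$i$i = P$i$i - (P$i$k)^2 / P$k$k"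
        using pkk by (simp add: P'ij u_def sym[of k i] field_simps power2_eq_square)
      thus ?thesis using pkk by simp
    qed
    have IH: "0 < det P' \<and> det P' \<le> (\<Prod>i\<in>UNIV. P'$i$i)"
      using insert.IH pdP' zero' by blast
    have "(\<Prod>i\<in>UNIV. P'$i$i) \<le> (\<Prod>i\<in>UNIV. P$i$i)"
      by (rule prod_mono) (use pd_diag[OF pdP'] diag' in \<open>auto simp: less_imp_le\<close>)
    thus "0 < det P \<and> det P \<le> (\<Prod>i\<in>UNIV. P$i$i)" using IH detP' by simp
  qed
qed

lemma hadamard:
  fixes P :: "real^'n^'n"
  assumes "pd P"
  shows "0 < det P" "det P \<le> (\<Prod>i\<in>UNIV. P$i$i)"
  using had_gen[of "UNIV::'n set"] assms by auto



lemma pd_add2: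
  fixes A B :: "real^'n^'n"
  assumes "pd A" "pd B" shows "pd (A + B)"
proof (rule pd_add[OF assms(1)])
  show "transpose B = B" using assms(2) pd_def by auto
  show "0 \<le> v \<bullet> (B *v v)" for v
    using assms(2) unfolding pd_def by (cases "v = 0") (auto simp: less_imp_le)
qed

lemma det_scale:
  fixes A :: "real^'n^'n"
  shows "det (k *\<^sub>R A) = k ^ CARD('n) * det A"
proof -
  have "k *\<^sub>R A = (k *\<^sub>R mat 1) ** A" by (simp add: scalar_matrix_assoc[symmetric])
  moreover have "det (k *\<^sub>R (mat 1 :: real^'n^'n)) = k ^ CARD('n)"
  proof -
    have "det (k *\<^sub>R (mat 1 :: real^'n^'n)) = (\<Prod>i\<in>UNIV. (k *\<^sub>R (mat 1 :: real^'n^'n))$i$i)"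
      by (rule det_diagonal) (simp add: mat_def)
    also have "\<dots> = (\<Prod>i\<in>(UNIV::'n set). k)" by (simp add: mat_def)
    also have "\<dots> = k ^ CARD('n)" by simp
    finally show ?thesis .
  qed
  ultimately show ?thesis by (simp add: det_mul)
qed

lemma step_bound:
  fixes D :: "real^'n^'n"
  assumes pdD: "pd D" and c: "0 < c"
  defines "A' \<equiv> matrix_inv (matrix_inv D + (1/c) *\<^sub>R mat 1)"
  shows "pd A'" "0 < det A'" "ln (det D) - ln (det A') \<le> trace D / c"
proof -
  define M where "M = matrix_inv D + (1/c) *\<^sub>R mat 1"
  have pdM: "pd M" unfolding M_def
    by (intro pd_add2 pd_minv pdD pd_scale pd_id) (use c in simp)
  show pdA: "pd A'" unfolding A'_def using pd_minv[OF pdM] M_def by simp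
  show dA: "0 < det A'" using hadamard(1)[OF pdA] .
  have invM: "invertible M" using pd_invertible[OF pdM] .
  have invD: "invertible D" using pd_invertible[OF pdD] .
  have detA: "det A' = 1 / det M" unfolding A'_def M_def[symmetric] using det_minv[OF invM] .
  define N where "N = mat 1 + (1/c) *\<^sub>R D"
  have DM: "D ** M = N"
    unfolding M_def N_def
    by (simp add: matrix_add_ldistrib minv(1)[OF invD] matrix_scalar_ac)
  have pdN: "pd N" unfolding N_def
    by (intro pd_add2 pd_id pd_scale pdD) (use c in simp)
  have dD: "0 < det D" using hadamard(1)[OF pdD] .
  have dM: "0 < det M" using hadamard(1)[OF pdM] .
  have "ln (det D) - ln (det A') = ln (det D) + ln (det M)"
    using detA dM by (simp add: ln_div)
  also have "\<dots> = ln (det N)" using dD dM DM det_mul[of D M] by (simp add: ln_mult)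
  also have "\<dots> \<le> ln (\<Prod>i\<in>UNIV. N$i$i)"
    using hadamard[OF pdN] by simp
  also have "\<dots> = (\<Sum>i\<in>UNIV. ln (N$i$i))"
    by (rule ln_prod) (use pd_diag[OF pdN] in \<open>auto simp: less_le\<close>)
  also have "\<dots> \<le> (\<Sum>i\<in>UNIV. D$i$i / c)"
  proof (rule sum_mono)
    fix i :: 'n
    have "N$i$i = 1 + D$i$i / c" by (simp add: N_def mat_def)
    moreover have "0 \<le> D$i$i / c" using pd_diag[OF pdD, of i] c by simp
    ultimately show "ln (N$i$i) \<le> D$i$i / c" using ln_add_one_self_le_self by simp
  qed
  also have "\<dots> = trace D / c" by (simp add: trace_def sum_divide_distrib)
  finally show "ln (det D) - ln (det A') \<le> trace D / c" .
qed

lemma frac_le_ln: "0 \<le> (q::real) \<Longrightarrow> q / (1 + q) \<le> ln (1 + q)"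
proof -
  assume q: "0 \<le> q"
  have "ln (1 / (1 + q)) \<le> 1 / (1 + q) - 1" using q by (intro ln_le_minus_one) simp
  moreover have "ln (1 / (1 + q)) = - ln (1 + q)" using q by (simp add: ln_div)
  moreover have "1 / (1 + q) - 1 = - (q / (1 + q))" using q by (simp add: field_simps)
  ultimately show ?thesis by simp
qed



lemma Dseq_pd:
  fixes b c :: real and x :: "nat \<Rightarrow> real^'d"
  assumes "0 < b" "b < c"
  shows "pd (Dseq b c x t)"
proof (induction t)
  case 0
  have "0 < b * c / (c - b)" using assms by simp
  thus ?case by (simp add: pd_scale pd_id)
next
  case (Suc t)
  have "pd (matrix_inv (matrix_inv (Dseq b c x t) + (1/c) *\<^sub>R mat 1))"
    using step_bound(1)[OF Suc] assms by simp
  thus ?case by (simp add: pd_add_outer)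
qed

lemma one_step:
  fixes b c :: real and x :: "nat \<Rightarrow> real^'d"
  assumes "0 < b" "b < c"
  shows "x (Suc s) \<bullet> (matrix_inv (Dseq b c x (Suc s)) *v x (Suc s))
     \<le> ln (det (Dseq b c x (Suc s))) - ln (det (Dseq b c x s)) + trace (Dseq b c x s) / c"
proof -
  define A' where "A' = matrix_inv (matrix_inv (Dseq b c x s) + (1/c) *\<^sub>R mat 1)"
  have c: "0 < c" using assms by simp
  have pdS: "pd (Dseq b c x s)" using Dseq_pd assms by blast
  have pdA: "pd A'" and dA: "0 < det A'"
    and sb: "ln (det (Dseq b c x s)) - ln (det A') \<le> trace (Dseq b c x s) / c"
    using step_bound[OF pdS c] A'_def by auto
  have DS: "Dseq b c x (Suc s) = A' + outer_prod (x (Suc s))" by (simp add: A'_def)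
  define q where "q = x (Suc s) \<bullet> (matrix_inv A' *v x (Suc s))"
  have q0: "0 \<le> q" and dD: "det (Dseq b c x (Suc s)) = det A' * (1 + q)"
    and val: "x (Suc s) \<bullet> (matrix_inv (Dseq b c x (Suc s)) *v x (Suc s)) = q / (1 + q)"
    using update[OF pdA, of "x (Suc s)"] DS q_def by auto
  have "ln (det (Dseq b c x (Suc s))) = ln (det A') + ln (1 + q)"
    using dD dA q0 by (simp add: ln_mult)
  thus ?thesis using val frac_le_ln[OF q0] sb by linarith
qed

lemma sum_bound:
  fixes b c :: real and x :: "nat \<Rightarrow> real^'d"
  assumes "0 < b" "b < c"
  shows "(\<Sum>t=1..T. x t \<bullet> (matrix_inv (Dseq b c x t) *v x t))
     \<le> ln (det (Dseq b c x T)) - ln (det (Dseq b c x 0)) + (1 / c) * (\<Sum>t=1..T. trace (Dseq b c x (t - 1)))"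
proof (induction T)
  case 0 then show ?case by simp
next
  case (Suc T)
  have "(\<Sum>t=1..Suc T. x t \<bullet> (matrix_inv (Dseq b c x t) *v x t))
      = (\<Sum>t=1..T. x t \<bullet> (matrix_inv (Dseq b c x t) *v x t)) + x (Suc T) \<bullet> (matrix_inv (Dseq b c x (Suc T)) *v x (Suc T))"
    by simp
  moreover have "(\<Sum>t=1..Suc T. trace (Dseq b c x (t - 1))) = (\<Sum>t=1..T. trace (Dseq b c x (t - 1))) + trace (Dseq b c x T)"
    by simp
  ultimately show ?case using Suc.IH one_step[OF assms, of x T]
    by (simp add: distrib_left)
qed

theorem lemma5:
  fixes b c :: real and x :: "nat \<Rightarrow> real^'d" and T :: nat
  assumes "0 < b" and "b < c"
  shows "(\<Sum>t=1..T. x t \<bullet> (matrix_inv (Dseq b c x t) *v x t))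
           \<le> ln (det ((1 / b) *\<^sub>R Dseq b c x T))
              + (1 / c) * (\<Sum>t=1..T. trace (Dseq b c x (t - 1)))"
proof -
  define k where "k = b * c / (c - b)"
  have kb: "b \<le> k" using assms by (simp add: k_def field_simps)
  have dT: "0 < det (Dseq b c x T)" using hadamard(1)[OF Dseq_pd[OF assms]] .
  have d0: "det (Dseq b c x 0) = k ^ CARD('d)" by (simp add: k_def det_scale)
  have "ln (det (Dseq b c x 0)) = real CARD('d) * ln k"
    using d0 assms kb by (simp add: ln_realpow)
  moreover have "ln (det ((1 / b) *\<^sub>R Dseq b c x T)) = real CARD('d) * ln (1/b) + ln (det (Dseq b c x T))"
    using dT assms by (simp add: det_scale ln_mult ln_realpow)
  moreover have "ln b \<le> ln k" using kb assms by simp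
  moreover have "ln (1/b) = - ln b" using assms by (simp add: ln_div)
  ultimately have "- ln (det (Dseq b c x 0)) \<le> ln (det ((1 / b) *\<^sub>R Dseq b c x T)) - ln (det (Dseq b c x T))"
    by (simp add: mult_left_mono)
  thus ?thesis using sum_bound[OF assms, of x T] by linarith
qed

end
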